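(* Let $B$ be a supersoluble brace, and let $C$ be a maximal subbrace of $B$ (a proper subbrace not properly contained in any proper subbrace). Then $|B:C|$ is a prime number. In particular, $(C,+)$ (resp. $(C,\cdot)$) is a maximal subgroup of $(B,+)$ (resp. $(B,\cdot)$) of prime index.
   Context: A brace (skew left brace) is a set $B$ with two binary operations $+$ and $\cdot$ such that $(B,+)$ and $(B,\cdot)$ are groups and $a(b+c)=ab-a+ac$ for all $a,b,c\in B$. A subbrace is a subset that is a subgroup of both groups. $\lambda_a(b)=-a+ab$ defines a homomorphism $\lambda\colon(B,\cdot)\to\operatorname{Aut}(B,+)$. An ideal is a subbrace normal in both groups and invariant under all $\lambda_b$; quotients by ideals are braces. $\operatorname{Soc}(B)=\operatorname{Ker}\lambda\cap Z(B,+)$. $B$ is supersoluble if there is a finite chain of ideals $\{0\}=I_0\le\dots\le I_n=B$ such that for each $i$, either $(I_{i+1}/I_i,+)$ is infinite cyclic and $I_{i+1}/I_i\le\operatorname{Soc}(B/I_i)$, or $I_{i+1}/I_i$ has prime order. For a subbrace $C$, if $|(B,+):(C,+)|$ and $|(B,\cdot):(C,\cdot)|$ are both finite and equal to $n$, the index $|B:C|$ is defined to be $n$. *)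

theory Defs
  imports "HOL-Algebra.Algebra" "HOL-Computational_Algebra.Primes"
begin

text \<open>A (skew left) brace is given by two group structures A (the additive group (B,+))
  and M (the multiplicative group (B,.)) on the same carrier, satisfying
  a(b+c) = ab - a + ac.\<close>

definition skew_brace :: "'a monoid \<Rightarrow> 'a monoid \<Rightarrow> bool" where
  "skew_brace A M \<longleftrightarrow> group A \<and> group M \<and> carrier A = carrier M \<and>
     (\<forall>a\<in>carrier A. \<forall>b\<in>carrier A. \<forall>c\<in>carrier A.
        a \<otimes>\<^bsub>M\<^esub> (b \<otimes>\<^bsub>A\<^esub> c)
        = (a \<otimes>\<^bsub>M\<^esub> b) \<otimes>\<^bsub>A\<^esub> (inv\<^bsub>A\<^esub> a) \<otimes>\<^bsub>A\<^esub> (a \<otimes>\<^bsub>M\<^esub> c))"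

definition brace_lambda :: "'a monoid \<Rightarrow> 'a monoid \<Rightarrow> 'a \<Rightarrow> 'a \<Rightarrow> 'a" where
  "brace_lambda A M a b = (inv\<^bsub>A\<^esub> a) \<otimes>\<^bsub>A\<^esub> (a \<otimes>\<^bsub>M\<^esub> b)"

definition subbrace :: "'a monoid \<Rightarrow> 'a monoid \<Rightarrow> 'a set \<Rightarrow> bool" where
  "subbrace A M C \<longleftrightarrow> subgroup C A \<and> subgroup C M"

definition brace_ideal :: "'a monoid \<Rightarrow> 'a monoid \<Rightarrow> 'a set \<Rightarrow> bool" where
  "brace_ideal A M I \<longleftrightarrow> subbrace A M I \<and> I \<lhd> A \<and> I \<lhd> M \<and>
     (\<forall>b\<in>carrier A. \<forall>x\<in>I. brace_lambda A M b x \<in> I)"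

definition brace_socle :: "'a monoid \<Rightarrow> 'a monoid \<Rightarrow> 'a set" where
  "brace_socle A M = {a \<in> carrier A. (\<forall>b\<in>carrier A. brace_lambda A M a b = b) \<and>
                                      (\<forall>b\<in>carrier A. a \<otimes>\<^bsub>A\<^esub> b = b \<otimes>\<^bsub>A\<^esub> a)}"

text \<open>The quotient brace B/I is (A Mod I, M Mod I); for an ideal I the additive and
  multiplicative cosets coincide, so both have the same carrier.
  The image J/I of a subset J of B in B/I:\<close>
definition brace_quot_set :: "'a monoid \<Rightarrow> 'a set \<Rightarrow> 'a set \<Rightarrow> 'a set set" where
  "brace_quot_set A I J = (\<lambda>a. I #>\<^bsub>A\<^esub> a) ` J"

definition infinite_cyclic_subset :: "('b, 'c) monoid_scheme \<Rightarrow> 'b set \<Rightarrow> bool" where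
  "infinite_cyclic_subset G S \<longleftrightarrow> infinite S \<and>
     (\<exists>g\<in>S. S = range (\<lambda>k::int. g [^]\<^bsub>G\<^esub> k))"

definition supersoluble_brace :: "'a monoid \<Rightarrow> 'a monoid \<Rightarrow> bool" where
  "supersoluble_brace A M \<longleftrightarrow>
     (\<exists>(I :: nat \<Rightarrow> 'a set) (n :: nat).
        I 0 = {\<one>\<^bsub>A\<^esub>} \<and> I n = carrier A \<and>
        (\<forall>i\<le>n. brace_ideal A M (I i)) \<and>
        (\<forall>i<n. I i \<subseteq> I (Suc i) \<and>
           ((infinite_cyclic_subset (A Mod (I i)) (brace_quot_set A (I i) (I (Suc i))) \<and>
             brace_quot_set A (I i) (I (Suc i)) \<subseteq> brace_socle (A Mod (I i)) (M Mod (I i)))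
            \<or> Factorial_Ring.prime (card (brace_quot_set A (I i) (I (Suc i)))))))"

definition maximal_subbrace :: "'a monoid \<Rightarrow> 'a monoid \<Rightarrow> 'a set \<Rightarrow> bool" where
  "maximal_subbrace A M C \<longleftrightarrow> subbrace A M C \<and> C \<noteq> carrier A \<and>
     (\<forall>D. subbrace A M D \<and> C \<subseteq> D \<and> D \<noteq> carrier A \<longrightarrow> D = C)"

definition maximal_subgroup :: "'a set \<Rightarrow> 'a monoid \<Rightarrow> bool" where
  "maximal_subgroup H G \<longleftrightarrow> subgroup H G \<and> H \<noteq> carrier G \<and>
     (\<forall>K. subgroup K G \<and> H \<subseteq> K \<longrightarrow> K = H \<or> K = carrier G)"

end

theory Submission
  imports Defs
begin


lemma card_image_eq_rel:
  assumes "\<And>x y. x \<in> S \<Longrightarrow> y \<in> S \<Longrightarrow> f x = f y \<longleftrightarrow> g x = g y"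
  shows "card (f ` S) = card (g ` S)"
proof -
  define h where "h = (\<lambda>y. g (inv_into S f y))"
  have 1: "h ` (f ` S) = g ` S"
  proof -
    have "h (f x) = g x" if "x \<in> S" for x
    proof -
      have "inv_into S f (f x) \<in> S" "f (inv_into S f (f x)) = f x"
        using that by (auto intro: inv_into_into f_inv_into_f)
      then show ?thesis unfolding h_def using assms that by blast
    qed
    then show ?thesis by (auto simp: image_iff)
  qed
  have 2: "inj_on h (f ` S)"
  proof (rule inj_onI)
    fix a b assume "a \<in> f ` S" "b \<in> f ` S" "h a = h b"
    then obtain x y where xy: "x \<in> S" "y \<in> S" "a = f x" "b = f y" by auto
    have "inv_into S f (f x) \<in> S" "f (inv_into S f (f x)) = f x"
         "inv_into S f (f y) \<in> S" "f (inv_into S f (f y)) = f y"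
      using xy by (auto intro: inv_into_into f_inv_into_f)
    then show "a = b" using \<open>h a = h b\<close> xy assms unfolding h_def by metis
  qed
  show ?thesis using card_image[OF 2] 1 by simp
qed

lemma (in group) rcos_eq_iff:
  assumes "subgroup H G" "x \<in> carrier G" "y \<in> carrier G"
  shows "H #> x = H #> y \<longleftrightarrow> x \<otimes> inv y \<in> H"
proof
  assume "H #> x = H #> y"
  then have "H #> (x \<otimes> inv y) = H"
    using coset_mult_inv2 assms subgroup.subset by blast
  then show "x \<otimes> inv y \<in> H" using coset_join1 assms by auto
next
  assume "x \<otimes> inv y \<in> H"
  then have "H #> (x \<otimes> inv y) = H" using coset_join2 assms by auto
  then show "H #> x = H #> y" using coset_mult_inv1 assms subgroup.subset by blast
qed

lemma (in group) normal_set_mult_comm: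
  assumes "subgroup H G" "N \<lhd> G"
  shows "H <#> N = N <#> H"
proof -
  have HC: "H \<subseteq> carrier G" and NC: "N \<subseteq> carrier G"
    using assms subgroup.subset normal_imp_subgroup by blast+
  show ?thesis
  proof
    show "H <#> N \<subseteq> N <#> H"
    proof
      fix z assume "z \<in> H <#> N"
      then obtain h n where hn: "h \<in> H" "n \<in> N" "z = h \<otimes> n" unfolding set_mult_def by blast
      have hc: "h \<in> carrier G" and nc: "n \<in> carrier G" using hn HC NC by auto
      have "h \<otimes> n \<otimes> inv h \<in> N" using normal.inv_op_closed2[OF assms(2)] hc hn by blast
      moreover have "z = (h \<otimes> n \<otimes> inv h) \<otimes> h" using hc nc hn by (simp add: m_assoc)
      ultimately show "z \<in> N <#> H" unfolding set_mult_def using hn by blast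
    qed
  next
    show "N <#> H \<subseteq> H <#> N"
    proof
      fix z assume "z \<in> N <#> H"
      then obtain h n where hn: "h \<in> H" "n \<in> N" "z = n \<otimes> h" unfolding set_mult_def by blast
      have hc: "h \<in> carrier G" and nc: "n \<in> carrier G" using hn HC NC by auto
      have "inv h \<otimes> n \<otimes> h \<in> N" using normal.inv_op_closed1[OF assms(2)] hc hn by blast
      moreover have "z = h \<otimes> (inv h \<otimes> n \<otimes> h)" using hc nc hn by (metis inv_closed m_assoc r_inv l_one m_closed)
      ultimately show "z \<in> H <#> N" unfolding set_mult_def using hn by blast
    qed
  qed
qed

lemma (in group) subgroup_set_mult_normal:
  assumes "subgroup H G" "N \<lhd> G"
  shows "subgroup (H <#> N) G"
  using normal_set_mult_comm[OF assms] mult_norm_subgroup[OF assms(2) assms(1)] by simp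

lemma (in group) index_transfer:
  assumes H: "subgroup H G" and N: "subgroup N G" and HN: "H <#> N = carrier G"
  shows "card (rcosets H) = card ((\<lambda>n. (H \<inter> N) #> n) ` N)"
proof -
  have HC: "H \<subseteq> carrier G" and NC: "N \<subseteq> carrier G"
    using assms subgroup.subset by blast+
  have HNs: "subgroup (H \<inter> N) G" using H N subgroups_Inter_pair by blast
  have "rcosets H = (\<lambda>n. H #> n) ` N"
  proof
    show "(\<lambda>n. H #> n) ` N \<subseteq> rcosets H" using NC rcosetsI HC by blast
  next
    show "rcosets H \<subseteq> (\<lambda>n. H #> n) ` N"
    proof
      fix Q assume "Q \<in> rcosets H"
      then obtain g where g: "g \<in> carrier G" "Q = H #> g" unfolding RCOSETS_def by blast
      then obtain h n where hn: "h \<in> H" "n \<in> N" "g = h \<otimes> n" using HN unfolding set_mult_def by blast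
      have "H #> g = (H #> h) #> n" using hn HC NC coset_mult_assoc[of H h n] by auto
      also have "\<dots> = H #> n" using coset_join2 hn H HC by auto
      finally show "Q \<in> (\<lambda>n. H #> n) ` N" using g hn by blast
    qed
  qed
  moreover have "card ((\<lambda>n. H #> n) ` N) = card ((\<lambda>n. (H \<inter> N) #> n) ` N)"
  proof (rule card_image_eq_rel)
    fix x y assume xy: "x \<in> N" "y \<in> N"
    then have c: "x \<in> carrier G" "y \<in> carrier G" using NC by auto
    have "x \<otimes> inv y \<in> N" using xy N subgroup.m_closed subgroup.m_inv_closed by metis
    then show "H #> x = H #> y \<longleftrightarrow> (H \<inter> N) #> x = (H \<inter> N) #> y"
      using rcos_eq_iff[OF H c] rcos_eq_iff[OF HNs c] by blast
  qed
  ultimately show ?thesis by simp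
qed


lemma (in group) prime_index_maximal:
  assumes C: "subgroup C G" and K: "subgroup K G" and CK: "C \<subseteq> K"
    and p: "Factorial_Ring.prime (card (rcosets C))"
  shows "K = C \<or> K = carrier G"
proof -
  have CC: "C \<subseteq> carrier G" and KC: "K \<subseteq> carrier G" using C K subgroup.subset by blast+
  define R where "R = rcosets C"
  have finR: "finite R" using p unfolding R_def by (metis card.infinite not_prime_0)
  define fib where "fib = (\<lambda>Y. {Q \<in> R. Q \<subseteq> Y})"
  define F where "F = fib K"
  have Rsub: "\<And>Q. Q \<in> R \<Longrightarrow> \<exists>g\<in>carrier G. Q = C #> g" unfolding R_def RCOSETS_def by blast
  have cover: "R = \<Union> (fib ` (rcosets K))"
  proof
    show "R \<subseteq> \<Union> (fib ` (rcosets K))"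
    proof
      fix Q assume Q: "Q \<in> R"
      then obtain g where g: "g \<in> carrier G" "Q = C #> g" using Rsub by blast
      have "Q \<subseteq> K #> g" using g CK unfolding r_coset_def by auto
      moreover have "K #> g \<in> rcosets K" using rcosetsI KC g by blast
      ultimately show "Q \<in> \<Union> (fib ` (rcosets K))" unfolding fib_def using Q by blast
    qed
  qed (auto simp: fib_def)
  have fibne: "\<And>g. g \<in> carrier G \<Longrightarrow> C #> g \<in> fib (K #> g)"
    unfolding fib_def R_def using CK rcosetsI CC by (auto simp: r_coset_def)
  have disj: "\<And>Y Y'. Y \<in> rcosets K \<Longrightarrow> Y' \<in> rcosets K \<Longrightarrow> fib Y \<inter> fib Y' \<noteq> {} \<Longrightarrow> Y = Y'"
  proof -
    fix Y Y' assume Y: "Y \<in> rcosets K" "Y' \<in> rcosets K" "fib Y \<inter> fib Y' \<noteq> {}"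
    then obtain Q where Q: "Q \<in> R" "Q \<subseteq> Y" "Q \<subseteq> Y'" unfolding fib_def by blast
    then obtain g where g: "g \<in> carrier G" "Q = C #> g" using Rsub by blast
    have "g \<in> Q" using g rcos_self C by blast
    then have "\<not> disjnt Y Y'" using Q unfolding disjnt_def by blast
    then show "Y = Y'" using rcos_disjoint[OF K] Y unfolding pairwise_def by blast
  qed
  have fibcard: "card (fib Y) = card F" if Y: "Y \<in> rcosets K" for Y
  proof -
    obtain g where g: "g \<in> carrier G" "Y = K #> g" using Y unfolding RCOSETS_def by blast
    have "bij_betw (\<lambda>Q. Q #> g) F (fib Y)"
    proof (rule bij_betw_byWitness[where f' = "\<lambda>Q. Q #> inv g"])
      show "\<forall>a\<in>F. a #> g #> inv g = a"
      proof
        fix a assume "a \<in> F"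
        then have "a \<subseteq> carrier G" unfolding F_def fib_def using KC by auto
        then show "a #> g #> inv g = a" using g coset_mult_assoc by simp
      qed
      show "\<forall>a'\<in>fib Y. a' #> inv g #> g = a'"
      proof
        fix a assume "a \<in> fib Y"
        then have "a \<subseteq> K #> g" unfolding fib_def using g(2) by blast
        then have "a \<subseteq> carrier G" using KC g r_coset_subset_G by blast
        then show "a #> inv g #> g = a" using g coset_mult_assoc by simp
      qed
      show "(\<lambda>Q. Q #> g) ` F \<subseteq> fib Y"
      proof
        fix Q' assume "Q' \<in> (\<lambda>Q. Q #> g) ` F"
        then obtain Q where Q: "Q \<in> R" "Q \<subseteq> K" "Q' = Q #> g" unfolding F_def fib_def by blast
        then obtain h where h: "h \<in> carrier G" "Q = C #> h" using Rsub by blast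
        have "Q' = C #> (h \<otimes> g)" using Q h g coset_mult_assoc CC by simp
        then have "Q' \<in> R" unfolding R_def using rcosetsI CC h g by simp
        moreover have "Q' \<subseteq> Y" using Q g unfolding r_coset_def by auto
        ultimately show "Q' \<in> fib Y" unfolding fib_def by blast
      qed
      show "(\<lambda>Q. Q #> inv g) ` fib Y \<subseteq> F"
      proof
        fix Q' assume "Q' \<in> (\<lambda>Q. Q #> inv g) ` fib Y"
        then obtain Q where Q: "Q \<in> R" "Q \<subseteq> Y" "Q' = Q #> inv g" unfolding fib_def by blast
        then obtain h where h: "h \<in> carrier G" "Q = C #> h" using Rsub by blast
        have "Q' = C #> (h \<otimes> inv g)" using Q h g coset_mult_assoc CC by simp
        then have "Q' \<in> R" unfolding R_def using rcosetsI CC h g by simp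
        moreover have "Q' \<subseteq> Y #> inv g" using Q g unfolding r_coset_def by auto
        moreover have "Y #> inv g = K" using g coset_mult_assoc KC
          by (simp add: coset_mult_one)
        ultimately show "Q' \<in> F" unfolding F_def fib_def by blast
      qed
    qed
    then show ?thesis by (simp add: bij_betw_same_card)
  qed
  have finfib: "finite (fib ` (rcosets K))"
    using finR cover by (metis finite_UnionD)
  have part: "card F * card (fib ` (rcosets K)) = card (\<Union> (fib ` (rcosets K)))"
  proof (rule card_partition[OF finfib])
    show "finite (\<Union> (fib ` (rcosets K)))" using finR cover by simp
    show "\<And>c. c \<in> fib ` (rcosets K) \<Longrightarrow> card c = card F" using fibcard by blast
    show "\<And>c1 c2. c1 \<in> fib ` (rcosets K) \<Longrightarrow> c2 \<in> fib ` (rcosets K) \<Longrightarrow> c1 \<noteq> c2 \<Longrightarrow> c1 \<inter> c2 = {}"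
      using disj by blast
  qed
  then have "Factorial_Ring.prime (card F * card (fib ` (rcosets K)))" using cover p R_def by simp
  then have "card F = 1 \<or> card (fib ` (rcosets K)) = 1" using prime_product by blast
  then show ?thesis
  proof
    assume F1: "card F = 1"
    have CF: "C \<in> F" unfolding F_def fib_def R_def using CK subgroup.subgroup_in_rcosets[OF C is_group] by simp
    have "K \<subseteq> C"
    proof
      fix k assume k: "k \<in> K"
      have "C #> k \<in> F" using fibne[of k] k KC unfolding F_def using coset_join2[OF _ K k] by auto
      then have "C #> k = C" using F1 CF by (metis card_1_singletonE singletonD)
      then show "k \<in> C" using coset_join1 C k KC by blast
    qed
    then show ?thesis using CK by blast
  next
    assume F1: "card (fib ` (rcosets K)) = 1"
    have KR: "K \<in> rcosets K" using subgroup.subgroup_in_rcosets[OF K is_group] .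
    have "carrier G \<subseteq> K"
    proof
      fix g assume g: "g \<in> carrier G"
      have "K #> g \<in> rcosets K" using rcosetsI KC g by blast
      then have "fib (K #> g) = fib K" using F1 KR by (metis card_1_singletonE imageI singletonD)
      then have "C #> g \<subseteq> K" using fibne[OF g] unfolding fib_def by blast
      moreover have "g \<in> C #> g" using rcos_self g C by blast
      ultimately show "g \<in> K" by blast
    qed
    then show ?thesis using KC by blast
  qed
qed


locale sbrace =
  fixes A M :: "'a monoid"
  assumes sb: "skew_brace A M"
begin

lemma grpA: "group A" and grpM: "group M" and carr: "carrier M = carrier A"
  using sb unfolding skew_brace_def by auto

sublocale A: group A by (rule grpA)
sublocale M: group M by (rule grpM)

lemma dist:
  assumes "a \<in> carrier A" "b \<in> carrier A" "c \<in> carrier A"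
  shows "a \<otimes>\<^bsub>M\<^esub> (b \<otimes>\<^bsub>A\<^esub> c) = (a \<otimes>\<^bsub>M\<^esub> b) \<otimes>\<^bsub>A\<^esub> (inv\<^bsub>A\<^esub> a) \<otimes>\<^bsub>A\<^esub> (a \<otimes>\<^bsub>M\<^esub> c)"
  using sb assms unfolding skew_brace_def by blast

lemma Mc: "a \<in> carrier A \<Longrightarrow> b \<in> carrier A \<Longrightarrow> a \<otimes>\<^bsub>M\<^esub> b \<in> carrier A"
  using M.m_closed carr by auto

lemma Minvc: "a \<in> carrier A \<Longrightarrow> inv\<^bsub>M\<^esub> a \<in> carrier A"
  using M.inv_closed carr by auto

lemma one_eq: "\<one>\<^bsub>M\<^esub> = \<one>\<^bsub>A\<^esub>"
proof -
  have o: "\<one>\<^bsub>M\<^esub> \<in> carrier A" using carr by auto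
  have "\<one>\<^bsub>M\<^esub> \<otimes>\<^bsub>M\<^esub> (\<one>\<^bsub>A\<^esub> \<otimes>\<^bsub>A\<^esub> \<one>\<^bsub>A\<^esub>) = (\<one>\<^bsub>M\<^esub> \<otimes>\<^bsub>M\<^esub> \<one>\<^bsub>A\<^esub>) \<otimes>\<^bsub>A\<^esub> (inv\<^bsub>A\<^esub> \<one>\<^bsub>M\<^esub>) \<otimes>\<^bsub>A\<^esub> (\<one>\<^bsub>M\<^esub> \<otimes>\<^bsub>M\<^esub> \<one>\<^bsub>A\<^esub>)"
    by (rule dist[OF o A.one_closed A.one_closed])
  then have "\<one>\<^bsub>A\<^esub> = inv\<^bsub>A\<^esub> \<one>\<^bsub>M\<^esub>" using o carr
    by (metis A.l_one A.one_closed A.r_cancel_one' A.inv_closed M.l_one)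
  then show ?thesis using o by (metis A.inv_inv A.inv_one)
qed

abbreviation lam where "lam \<equiv> brace_lambda A M"

lemma lam_closed: "a \<in> carrier A \<Longrightarrow> b \<in> carrier A \<Longrightarrow> lam a b \<in> carrier A"
  unfolding brace_lambda_def using Mc by auto

lemma mult_eq: "a \<in> carrier A \<Longrightarrow> b \<in> carrier A \<Longrightarrow> a \<otimes>\<^bsub>M\<^esub> b = a \<otimes>\<^bsub>A\<^esub> lam a b"
  unfolding brace_lambda_def using Mc by (simp add: A.m_assoc[symmetric])

lemma lam_add:
  assumes "a \<in> carrier A" "b \<in> carrier A" "c \<in> carrier A"
  shows "lam a (b \<otimes>\<^bsub>A\<^esub> c) = lam a b \<otimes>\<^bsub>A\<^esub> lam a c"
  unfolding brace_lambda_def using assms dist Mc by (simp add: A.m_assoc)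

lemma lam_one: "b \<in> carrier A \<Longrightarrow> lam \<one>\<^bsub>A\<^esub> b = b"
  unfolding brace_lambda_def using one_eq carr by (metis A.inv_one A.l_one M.l_one)

lemma mult_oneA: "a \<in> carrier A \<Longrightarrow> a \<otimes>\<^bsub>M\<^esub> \<one>\<^bsub>A\<^esub> = a"
  using one_eq carr by (metis M.r_one)

lemma lam_hom: "a \<in> carrier A \<Longrightarrow> lam a \<in> hom A A"
  by (rule homI) (auto simp: lam_closed lam_add)

lemma lam_invA: "a \<in> carrier A \<Longrightarrow> b \<in> carrier A \<Longrightarrow> lam a (inv\<^bsub>A\<^esub> b) = inv\<^bsub>A\<^esub> (lam a b)"
  using group_hom.hom_inv[of A A "lam a"] lam_hom grpA unfolding group_hom_def group_hom_axioms_def by blast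

lemma lam_pow: "a \<in> carrier A \<Longrightarrow> b \<in> carrier A \<Longrightarrow> lam a (b [^]\<^bsub>A\<^esub> (k::int)) = (lam a b) [^]\<^bsub>A\<^esub> k"
  using hom_int_pow[OF lam_hom] grpA by blast

lemma mult_invA:
  assumes "a \<in> carrier A" "b \<in> carrier A"
  shows "a \<otimes>\<^bsub>M\<^esub> (inv\<^bsub>A\<^esub> b) = a \<otimes>\<^bsub>A\<^esub> inv\<^bsub>A\<^esub> (a \<otimes>\<^bsub>M\<^esub> b) \<otimes>\<^bsub>A\<^esub> a"
proof -
  have "a = a \<otimes>\<^bsub>M\<^esub> (b \<otimes>\<^bsub>A\<^esub> inv\<^bsub>A\<^esub> b)" using assms mult_oneA by simp
  also have "\<dots> = (a \<otimes>\<^bsub>M\<^esub> b) \<otimes>\<^bsub>A\<^esub> inv\<^bsub>A\<^esub> a \<otimes>\<^bsub>A\<^esub> (a \<otimes>\<^bsub>M\<^esub> inv\<^bsub>A\<^esub> b)"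
    by (rule dist[OF assms A.inv_closed[OF assms(2)]])
  finally have e: "a = (a \<otimes>\<^bsub>M\<^esub> b) \<otimes>\<^bsub>A\<^esub> inv\<^bsub>A\<^esub> a \<otimes>\<^bsub>A\<^esub> (a \<otimes>\<^bsub>M\<^esub> inv\<^bsub>A\<^esub> b)" .
  have c: "a \<otimes>\<^bsub>M\<^esub> b \<in> carrier A" "a \<otimes>\<^bsub>M\<^esub> inv\<^bsub>A\<^esub> b \<in> carrier A" using assms Mc by auto
  show ?thesis using e c assms
    by (metis A.inv_closed A.inv_solve_left A.m_assoc A.m_closed)
qed

lemma lam_comp:
  assumes a: "a \<in> carrier A" and b: "b \<in> carrier A" and x: "x \<in> carrier A"
  shows "lam a (lam b x) = lam (a \<otimes>\<^bsub>M\<^esub> b) x"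
proof -
  have c: "a \<otimes>\<^bsub>M\<^esub> b \<in> carrier A" "b \<otimes>\<^bsub>M\<^esub> x \<in> carrier A" "a \<otimes>\<^bsub>M\<^esub> (b \<otimes>\<^bsub>M\<^esub> x) \<in> carrier A"
    using Mc assms by auto
  have "lam a (lam b x) = inv\<^bsub>A\<^esub> a \<otimes>\<^bsub>A\<^esub> (a \<otimes>\<^bsub>M\<^esub> (inv\<^bsub>A\<^esub> b \<otimes>\<^bsub>A\<^esub> (b \<otimes>\<^bsub>M\<^esub> x)))"
    unfolding brace_lambda_def ..
  also have "\<dots> = inv\<^bsub>A\<^esub> a \<otimes>\<^bsub>A\<^esub> ((a \<otimes>\<^bsub>M\<^esub> inv\<^bsub>A\<^esub> b) \<otimes>\<^bsub>A\<^esub> inv\<^bsub>A\<^esub> a \<otimes>\<^bsub>A\<^esub> (a \<otimes>\<^bsub>M\<^esub> (b \<otimes>\<^bsub>M\<^esub> x)))"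
    using dist assms c by simp
  also have "\<dots> = inv\<^bsub>A\<^esub> a \<otimes>\<^bsub>A\<^esub> ((a \<otimes>\<^bsub>A\<^esub> inv\<^bsub>A\<^esub> (a \<otimes>\<^bsub>M\<^esub> b) \<otimes>\<^bsub>A\<^esub> a) \<otimes>\<^bsub>A\<^esub> inv\<^bsub>A\<^esub> a \<otimes>\<^bsub>A\<^esub> (a \<otimes>\<^bsub>M\<^esub> (b \<otimes>\<^bsub>M\<^esub> x)))"
    using mult_invA a b by simp
  also have "\<dots> = inv\<^bsub>A\<^esub> (a \<otimes>\<^bsub>M\<^esub> b) \<otimes>\<^bsub>A\<^esub> (a \<otimes>\<^bsub>M\<^esub> (b \<otimes>\<^bsub>M\<^esub> x))"
    using a c by (simp add: A.m_assoc) (metis A.inv_closed A.inv_solve_left A.m_closed)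
  also have "\<dots> = lam (a \<otimes>\<^bsub>M\<^esub> b) x" unfolding brace_lambda_def using a b x carr by (simp add: M.m_assoc)
  finally show ?thesis .
qed

lemma lam_invM1: "a \<in> carrier A \<Longrightarrow> x \<in> carrier A \<Longrightarrow> lam (inv\<^bsub>M\<^esub> a) (lam a x) = x"
  using lam_comp[of "inv\<^bsub>M\<^esub> a" a x] Minvc carr one_eq lam_one by (simp add: M.l_inv)

lemma lam_invM2: "a \<in> carrier A \<Longrightarrow> x \<in> carrier A \<Longrightarrow> lam a (lam (inv\<^bsub>M\<^esub> a) x) = x"
  using lam_comp[of a "inv\<^bsub>M\<^esub> a" x] Minvc carr one_eq lam_one by (simp add: M.r_inv)

end


context sbrace begin

lemma idealD:
  assumes "brace_ideal A M K"
  shows "subgroup K A" "subgroup K M" "K \<lhd> A" "K \<lhd> M" "K \<subseteq> carrier A"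
    "\<And>b x. b \<in> carrier A \<Longrightarrow> x \<in> K \<Longrightarrow> lam b x \<in> K"
  using assms unfolding brace_ideal_def subbrace_def by (auto dest: subgroup.subset)

lemma ideal_rcos_eq:
  assumes I: "brace_ideal A M K" and a: "a \<in> carrier A"
  shows "K #>\<^bsub>A\<^esub> a = K #>\<^bsub>M\<^esub> a"
proof -
  note D = idealD[OF I]
  have "a <#\<^bsub>M\<^esub> K = a <#\<^bsub>A\<^esub> K"
  proof
    show "a <#\<^bsub>M\<^esub> K \<subseteq> a <#\<^bsub>A\<^esub> K"
    proof
      fix z assume "z \<in> a <#\<^bsub>M\<^esub> K"
      then obtain k where k: "k \<in> K" "z = a \<otimes>\<^bsub>M\<^esub> k" unfolding l_coset_def by blast
      then have "z = a \<otimes>\<^bsub>A\<^esub> lam a k" using mult_eq a D(5) by auto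
      then show "z \<in> a <#\<^bsub>A\<^esub> K" using D(6)[OF a k(1)] unfolding l_coset_def by blast
    qed
  next
    show "a <#\<^bsub>A\<^esub> K \<subseteq> a <#\<^bsub>M\<^esub> K"
    proof
      fix z assume "z \<in> a <#\<^bsub>A\<^esub> K"
      then obtain k where k: "k \<in> K" "z = a \<otimes>\<^bsub>A\<^esub> k" unfolding l_coset_def by blast
      have kc: "k \<in> carrier A" using k D(5) by auto
      have m: "lam (inv\<^bsub>M\<^esub> a) k \<in> K" using D(6) Minvc a k by blast
      have "a \<otimes>\<^bsub>M\<^esub> lam (inv\<^bsub>M\<^esub> a) k = a \<otimes>\<^bsub>A\<^esub> k"
        using mult_eq[OF a lam_closed[OF Minvc[OF a] kc]] lam_invM2[OF a kc] by simp
      then show "z \<in> a <#\<^bsub>M\<^esub> K" using m k unfolding l_coset_def by blast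
    qed
  qed
  moreover have "K #>\<^bsub>A\<^esub> a = a <#\<^bsub>A\<^esub> K" using normal.coset_eq[OF D(3)] a by blast
  moreover have "K #>\<^bsub>M\<^esub> a = a <#\<^bsub>M\<^esub> K" using normal.coset_eq[OF D(4)] a carr by blast
  ultimately show ?thesis by simp
qed

lemma subbraceD:
  assumes "subbrace A M C"
  shows "subgroup C A" "subgroup C M" "C \<subseteq> carrier A"
  using assms unfolding subbrace_def by (auto dest: subgroup.subset)

lemma set_mult_ideal_eq:
  assumes C: "subbrace A M C" and I: "brace_ideal A M N"
  shows "C <#>\<^bsub>A\<^esub> N = C <#>\<^bsub>M\<^esub> N"
proof -
  note D = idealD[OF I] and E = subbraceD[OF C]
  show ?thesis
  proof
    show "C <#>\<^bsub>A\<^esub> N \<subseteq> C <#>\<^bsub>M\<^esub> N"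
    proof
      fix z assume "z \<in> C <#>\<^bsub>A\<^esub> N"
      then obtain c k where k: "c \<in> C" "k \<in> N" "z = c \<otimes>\<^bsub>A\<^esub> k" unfolding set_mult_def by blast
      have kc: "k \<in> carrier A" "c \<in> carrier A" using k D(5) E(3) by auto
      have m: "lam (inv\<^bsub>M\<^esub> c) k \<in> N" using D(6) Minvc kc k by blast
      have "c \<otimes>\<^bsub>M\<^esub> lam (inv\<^bsub>M\<^esub> c) k = c \<otimes>\<^bsub>A\<^esub> k"
        using mult_eq[OF kc(2) lam_closed[OF Minvc[OF kc(2)] kc(1)]] lam_invM2[OF kc(2) kc(1)] by simp
      then show "z \<in> C <#>\<^bsub>M\<^esub> N" using m k unfolding set_mult_def by blast
    qed
  next
    show "C <#>\<^bsub>M\<^esub> N \<subseteq> C <#>\<^bsub>A\<^esub> N"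
    proof
      fix z assume "z \<in> C <#>\<^bsub>M\<^esub> N"
      then obtain c k where k: "c \<in> C" "k \<in> N" "z = c \<otimes>\<^bsub>M\<^esub> k" unfolding set_mult_def by blast
      have kc: "k \<in> carrier A" "c \<in> carrier A" using k D(5) E(3) by auto
      have "z = c \<otimes>\<^bsub>A\<^esub> lam c k" using mult_eq kc k by auto
      then show "z \<in> C <#>\<^bsub>A\<^esub> N" using D(6)[OF kc(2) k(2)] k unfolding set_mult_def by blast
    qed
  qed
qed

lemma subbrace_set_mult_ideal:
  assumes C: "subbrace A M C" and I: "brace_ideal A M N"
  shows "subbrace A M (C <#>\<^bsub>A\<^esub> N)"
proof -
  note D = idealD[OF I] and E = subbraceD[OF C]
  have "subgroup (C <#>\<^bsub>A\<^esub> N) A" using A.subgroup_set_mult_normal E(1) D(3) by blast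
  moreover have "subgroup (C <#>\<^bsub>M\<^esub> N) M" using M.subgroup_set_mult_normal E(2) D(4) by blast
  ultimately show ?thesis unfolding subbrace_def using set_mult_ideal_eq[OF C I] by simp
qed

lemma left_ideal_subgroupM:
  assumes J: "subgroup J A" and L: "\<And>b x. b \<in> carrier A \<Longrightarrow> x \<in> J \<Longrightarrow> lam b x \<in> J"
  shows "subgroup J M"
proof (rule M.subgroupI)
  have JC: "J \<subseteq> carrier A" using J subgroup.subset by blast
  then show "J \<subseteq> carrier M" using carr by simp
  show "J \<noteq> {}" using J subgroup.one_closed by blast
  show "a \<otimes>\<^bsub>M\<^esub> b \<in> J" if "a \<in> J" "b \<in> J" for a b
  proof -
    have "a \<in> carrier A" "b \<in> carrier A" using that JC by auto
    then have "a \<otimes>\<^bsub>M\<^esub> b = a \<otimes>\<^bsub>A\<^esub> lam a b" using mult_eq by blast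
    moreover have "lam a b \<in> J" using L that \<open>a \<in> carrier A\<close> by blast
    ultimately show ?thesis using subgroup.m_closed[OF J] that by metis
  qed
  show "inv\<^bsub>M\<^esub> a \<in> J" if a: "a \<in> J" for a
  proof -
    have ac: "a \<in> carrier A" using a JC by auto
    have r: "a \<otimes>\<^bsub>M\<^esub> inv\<^bsub>M\<^esub> a = \<one>\<^bsub>M\<^esub>" by (rule M.r_inv) (simp only: carr ac)
    have "a \<otimes>\<^bsub>A\<^esub> lam a (inv\<^bsub>M\<^esub> a) = a \<otimes>\<^bsub>M\<^esub> inv\<^bsub>M\<^esub> a"
      by (rule mult_eq[OF ac Minvc[OF ac], symmetric])
    also have "\<dots> = \<one>\<^bsub>M\<^esub>" by (rule r)
    also have "\<dots> = \<one>\<^bsub>A\<^esub>" by (rule one_eq)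
    finally have "a \<otimes>\<^bsub>A\<^esub> lam a (inv\<^bsub>M\<^esub> a) = \<one>\<^bsub>A\<^esub>" .
    then have e: "lam a (inv\<^bsub>M\<^esub> a) = inv\<^bsub>A\<^esub> a"
    proof -
      assume eq: "a \<otimes>\<^bsub>A\<^esub> lam a (inv\<^bsub>M\<^esub> a) = \<one>\<^bsub>A\<^esub>"
      have lc: "lam a (inv\<^bsub>M\<^esub> a) \<in> carrier A" using lam_closed[OF ac Minvc[OF ac]] .
      have "lam a (inv\<^bsub>M\<^esub> a) = inv\<^bsub>A\<^esub> a \<otimes>\<^bsub>A\<^esub> (a \<otimes>\<^bsub>A\<^esub> lam a (inv\<^bsub>M\<^esub> a))"
        using ac lc by (simp add: A.m_assoc[symmetric])
      also have "\<dots> = inv\<^bsub>A\<^esub> a" using eq ac by simp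
      finally show ?thesis .
    qed
    have eq2: "inv\<^bsub>M\<^esub> a = lam (inv\<^bsub>M\<^esub> a) (inv\<^bsub>A\<^esub> a)"
      using lam_invM1[OF ac Minvc[OF ac]] unfolding e by (rule sym)
    have "inv\<^bsub>A\<^esub> a \<in> J" by (rule subgroup.m_inv_closed[OF J a])
    then have "lam (inv\<^bsub>M\<^esub> a) (inv\<^bsub>A\<^esub> a) \<in> J" using L Minvc[OF ac] by blast
    then show ?thesis by (simp only: eq2[symmetric])
  qed
qed

end


context sbrace begin

lemma socle_props:
  assumes I: "brace_ideal A M K" and y: "y \<in> carrier A"
    and soc: "K #>\<^bsub>A\<^esub> y \<in> brace_socle (A Mod K) (M Mod K)" and b: "b \<in> carrier A"
  shows "K #>\<^bsub>A\<^esub> (y \<otimes>\<^bsub>M\<^esub> b) = K #>\<^bsub>A\<^esub> (y \<otimes>\<^bsub>A\<^esub> b)"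
    and "K #>\<^bsub>A\<^esub> (y \<otimes>\<^bsub>A\<^esub> b) = K #>\<^bsub>A\<^esub> (b \<otimes>\<^bsub>A\<^esub> y)"
proof -
  note D = idealD[OF I]
  have yM: "y \<in> carrier M" and bM: "b \<in> carrier M" using y b carr by auto
  have Xb: "K #>\<^bsub>A\<^esub> b \<in> carrier (A Mod K)" using b by (simp add: carrier_FactGroup)
  have Xy: "K #>\<^bsub>A\<^esub> y \<in> carrier (A Mod K)" using y by (simp add: carrier_FactGroup)
  have L: "brace_lambda (A Mod K) (M Mod K) (K #>\<^bsub>A\<^esub> y) (K #>\<^bsub>A\<^esub> b) = K #>\<^bsub>A\<^esub> b"
   and Cm: "(K #>\<^bsub>A\<^esub> y) \<otimes>\<^bsub>A Mod K\<^esub> (K #>\<^bsub>A\<^esub> b) = (K #>\<^bsub>A\<^esub> b) \<otimes>\<^bsub>A Mod K\<^esub> (K #>\<^bsub>A\<^esub> y)"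
    using soc Xb unfolding brace_socle_def by auto
  have m1: "(K #>\<^bsub>A\<^esub> y) \<otimes>\<^bsub>M Mod K\<^esub> (K #>\<^bsub>A\<^esub> b) = K #>\<^bsub>A\<^esub> (y \<otimes>\<^bsub>M\<^esub> b)"
  proof -
    have "(K #>\<^bsub>A\<^esub> y) \<otimes>\<^bsub>M Mod K\<^esub> (K #>\<^bsub>A\<^esub> b) = (K #>\<^bsub>M\<^esub> y) <#>\<^bsub>M\<^esub> (K #>\<^bsub>M\<^esub> b)"
      using ideal_rcos_eq[OF I y] ideal_rcos_eq[OF I b] by simp
    also have "\<dots> = K #>\<^bsub>M\<^esub> (y \<otimes>\<^bsub>M\<^esub> b)" using normal.rcos_sum[OF D(4) yM bM] .
    also have "\<dots> = K #>\<^bsub>A\<^esub> (y \<otimes>\<^bsub>M\<^esub> b)" using ideal_rcos_eq[OF I Mc[OF y b]] by simp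
    finally show ?thesis .
  qed
  have i1: "inv\<^bsub>A Mod K\<^esub> (K #>\<^bsub>A\<^esub> y) = K #>\<^bsub>A\<^esub> inv\<^bsub>A\<^esub> y"
    using normal.inv_FactGroup[OF D(3) Xy] normal.rcos_inv[OF D(3) y] by simp
  have "K #>\<^bsub>A\<^esub> (inv\<^bsub>A\<^esub> y \<otimes>\<^bsub>A\<^esub> (y \<otimes>\<^bsub>M\<^esub> b)) = K #>\<^bsub>A\<^esub> b"
    using L unfolding brace_lambda_def i1 m1
    using normal.rcos_sum[OF D(3) A.inv_closed[OF y] Mc[OF y b]] by simp
  then have "(K #>\<^bsub>A\<^esub> y) <#>\<^bsub>A\<^esub> (K #>\<^bsub>A\<^esub> (inv\<^bsub>A\<^esub> y \<otimes>\<^bsub>A\<^esub> (y \<otimes>\<^bsub>M\<^esub> b))) = (K #>\<^bsub>A\<^esub> y) <#>\<^bsub>A\<^esub> (K #>\<^bsub>A\<^esub> b)"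
    by simp
  then have "K #>\<^bsub>A\<^esub> (y \<otimes>\<^bsub>A\<^esub> (inv\<^bsub>A\<^esub> y \<otimes>\<^bsub>A\<^esub> (y \<otimes>\<^bsub>M\<^esub> b))) = K #>\<^bsub>A\<^esub> (y \<otimes>\<^bsub>A\<^esub> b)"
    using normal.rcos_sum[OF D(3)] y b Mc[OF y b] by simp
  then show "K #>\<^bsub>A\<^esub> (y \<otimes>\<^bsub>M\<^esub> b) = K #>\<^bsub>A\<^esub> (y \<otimes>\<^bsub>A\<^esub> b)"
    using y Mc[OF y b] by (simp add: A.m_assoc[symmetric])
  show "K #>\<^bsub>A\<^esub> (y \<otimes>\<^bsub>A\<^esub> b) = K #>\<^bsub>A\<^esub> (b \<otimes>\<^bsub>A\<^esub> y)"
    using Cm normal.rcos_sum[OF D(3)] y b by simp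
qed

end


context sbrace begin

lemma ideal_normal_M_crit:
  assumes K: "brace_ideal A M K" and JA: "J \<lhd> A" and KJ: "K \<subseteq> J"
    and L: "\<And>b x. b \<in> carrier A \<Longrightarrow> x \<in> J \<Longrightarrow> lam b x \<in> J"
    and S: "\<And>z b. z \<in> J \<Longrightarrow> b \<in> carrier A \<Longrightarrow> K #>\<^bsub>A\<^esub> (z \<otimes>\<^bsub>M\<^esub> b) = K #>\<^bsub>A\<^esub> (z \<otimes>\<^bsub>A\<^esub> b)"
  shows "brace_ideal A M J"
proof -
  note D = idealD[OF K]
  have JsA: "subgroup J A" using JA normal_imp_subgroup by blast
  have JC: "J \<subseteq> carrier A" using JsA subgroup.subset by blast
  have JsM: "subgroup J M" using left_ideal_subgroupM[OF JsA L] .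
  have "J \<lhd> M"
  proof (rule M.normal_invI[OF JsM])
    fix b z assume b: "b \<in> carrier M" and z: "z \<in> J"
    have bc: "b \<in> carrier A" using b carr by simp
    have zc: "z \<in> carrier A" using z JC by auto
    define b' where "b' = inv\<^bsub>M\<^esub> b"
    have b'c: "b' \<in> carrier A" using Minvc[OF bc] b'_def by simp
    have "K #>\<^bsub>A\<^esub> (z \<otimes>\<^bsub>M\<^esub> b') = K #>\<^bsub>A\<^esub> (z \<otimes>\<^bsub>A\<^esub> b')" using S[OF z b'c] .
    then have "(z \<otimes>\<^bsub>M\<^esub> b') \<otimes>\<^bsub>A\<^esub> inv\<^bsub>A\<^esub> (z \<otimes>\<^bsub>A\<^esub> b') \<in> K"
      using A.rcos_eq_iff[OF D(1)] Mc[OF zc b'c] zc b'c by simp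
    then obtain i where i: "i \<in> K" "(z \<otimes>\<^bsub>M\<^esub> b') \<otimes>\<^bsub>A\<^esub> inv\<^bsub>A\<^esub> (z \<otimes>\<^bsub>A\<^esub> b') = i" by blast
    have ic: "i \<in> carrier A" using i D(5) by auto
    have e1: "z \<otimes>\<^bsub>M\<^esub> b' = (i \<otimes>\<^bsub>A\<^esub> z) \<otimes>\<^bsub>A\<^esub> b'"
      using i(2) Mc[OF zc b'c] zc b'c ic
      by (metis A.inv_solve_right A.m_assoc A.m_closed)
    define w where "w = i \<otimes>\<^bsub>A\<^esub> z"
    have wJ: "w \<in> J" unfolding w_def using subgroup.m_closed[OF JsA] KJ i(1) z by blast
    have wc: "w \<in> carrier A" using wJ JC by auto
    have "b \<otimes>\<^bsub>M\<^esub> z \<otimes>\<^bsub>M\<^esub> inv\<^bsub>M\<^esub> b = b \<otimes>\<^bsub>M\<^esub> (z \<otimes>\<^bsub>M\<^esub> b')"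
      unfolding b'_def using M.m_assoc[OF b _ M.inv_closed[OF b], of z] zc carr by simp
    also have "\<dots> = b \<otimes>\<^bsub>M\<^esub> (w \<otimes>\<^bsub>A\<^esub> b')" using e1 w_def by simp
    also have "\<dots> = (b \<otimes>\<^bsub>M\<^esub> w) \<otimes>\<^bsub>A\<^esub> inv\<^bsub>A\<^esub> b \<otimes>\<^bsub>A\<^esub> (b \<otimes>\<^bsub>M\<^esub> b')"
      using dist[OF bc wc b'c] .
    also have "b \<otimes>\<^bsub>M\<^esub> b' = \<one>\<^bsub>A\<^esub>" unfolding b'_def using b one_eq by simp
    also have "b \<otimes>\<^bsub>M\<^esub> w = b \<otimes>\<^bsub>A\<^esub> lam b w" using mult_eq[OF bc wc] .
    finally have e2: "b \<otimes>\<^bsub>M\<^esub> z \<otimes>\<^bsub>M\<^esub> inv\<^bsub>M\<^esub> b = b \<otimes>\<^bsub>A\<^esub> lam b w \<otimes>\<^bsub>A\<^esub> inv\<^bsub>A\<^esub> b"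
      using bc lam_closed[OF bc wc] by simp
    have "lam b w \<in> J" using L[OF bc wJ] .
    then have "b \<otimes>\<^bsub>A\<^esub> lam b w \<otimes>\<^bsub>A\<^esub> inv\<^bsub>A\<^esub> b \<in> J" using A.normal_invE(2)[OF JA bc] by blast
    then show "b \<otimes>\<^bsub>M\<^esub> z \<otimes>\<^bsub>M\<^esub> inv\<^bsub>M\<^esub> b \<in> J" using e2 by simp
  qed
  then show ?thesis unfolding brace_ideal_def subbrace_def using JsA JsM JA L by blast
qed

end


context sbrace begin

lemma quot_hom:
  assumes K: "brace_ideal A M K"
  shows "group_hom A (A Mod K) (\<lambda>a. K #>\<^bsub>A\<^esub> a)"
  using grpA normal.factorgroup_is_group[OF idealD(3)[OF K]] normal.r_coset_hom_Mod[OF idealD(3)[OF K]]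
  unfolding group_hom_def group_hom_axioms_def by blast

lemma cyc_ideal:
  assumes K: "brace_ideal A M K" and N: "brace_ideal A M N" and KN: "K \<subseteq> N"
    and x0: "x0 \<in> N"
    and gen: "\<And>n. n \<in> N \<Longrightarrow> \<exists>k::int. K #>\<^bsub>A\<^esub> n = K #>\<^bsub>A\<^esub> (x0 [^]\<^bsub>A\<^esub> k)"
    and soc: "\<And>n. n \<in> N \<Longrightarrow> K #>\<^bsub>A\<^esub> n \<in> brace_socle (A Mod K) (M Mod K)"
  shows "brace_ideal A M {z \<in> carrier A. \<exists>k::int. K #>\<^bsub>A\<^esub> z = K #>\<^bsub>A\<^esub> (x0 [^]\<^bsub>A\<^esub> (q * k))}"
    (is "brace_ideal A M ?J")
proof -
  note DK = idealD[OF K] and DN = idealD[OF N]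
  interpret h: group_hom A "A Mod K" "\<lambda>a. K #>\<^bsub>A\<^esub> a" using quot_hom[OF K] .
  have x0c: "x0 \<in> carrier A" using x0 DN(5) by auto
  have xpc: "\<And>k::int. x0 [^]\<^bsub>A\<^esub> k \<in> carrier A" using x0c by simp
  have xpN: "\<And>k::int. x0 [^]\<^bsub>A\<^esub> k \<in> N" using A.subgroup_int_pow_closed[OF DN(1) x0] .
  have heq: "\<And>a b. a \<in> carrier A \<Longrightarrow> b \<in> carrier A \<Longrightarrow> K #>\<^bsub>A\<^esub> a = K #>\<^bsub>A\<^esub> b \<longleftrightarrow> a \<otimes>\<^bsub>A\<^esub> inv\<^bsub>A\<^esub> b \<in> K"
    using A.rcos_eq_iff[OF DK(1)] by blast
  have hmul: "\<And>a b. a \<in> carrier A \<Longrightarrow> b \<in> carrier A \<Longrightarrow> K #>\<^bsub>A\<^esub> (a \<otimes>\<^bsub>A\<^esub> b) = (K #>\<^bsub>A\<^esub> a) <#>\<^bsub>A\<^esub> (K #>\<^bsub>A\<^esub> b)"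
    using normal.rcos_sum[OF DK(3)] by simp
  have JC: "?J \<subseteq> carrier A" by blast
  have JN: "?J \<subseteq> N"
  proof
    fix z assume z: "z \<in> ?J"
    then obtain k where k: "z \<in> carrier A" "K #>\<^bsub>A\<^esub> z = K #>\<^bsub>A\<^esub> (x0 [^]\<^bsub>A\<^esub> (q * k))" by blast
    then have "z \<otimes>\<^bsub>A\<^esub> inv\<^bsub>A\<^esub> (x0 [^]\<^bsub>A\<^esub> (q * k)) \<in> N" using heq xpc KN by blast
    then have "z \<otimes>\<^bsub>A\<^esub> inv\<^bsub>A\<^esub> (x0 [^]\<^bsub>A\<^esub> (q * k)) \<otimes>\<^bsub>A\<^esub> (x0 [^]\<^bsub>A\<^esub> (q * k)) \<in> N"
      using subgroup.m_closed[OF DN(1)] xpN by blast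
    then show "z \<in> N" using k(1) xpc by (simp add: A.m_assoc)
  qed
  have KJ: "K \<subseteq> ?J"
  proof
    fix i assume i: "i \<in> K"
    have ic: "i \<in> carrier A" using i DK(5) by auto
    have "K #>\<^bsub>A\<^esub> i = K" using A.coset_join2[OF ic DK(1) i] .
    also have "K = K #>\<^bsub>A\<^esub> (x0 [^]\<^bsub>A\<^esub> (q * 0))" using DK(5) by simp
    finally show "i \<in> ?J" using ic by blast
  qed
  have JsA: "subgroup ?J A"
  proof (rule A.subgroupI)
    show "?J \<subseteq> carrier A" by blast
    show "?J \<noteq> {}" using KJ DK(1) subgroup.one_closed by blast
    show "inv\<^bsub>A\<^esub> z \<in> ?J" if z: "z \<in> ?J" for z
    proof -
      obtain k where k: "z \<in> carrier A" "K #>\<^bsub>A\<^esub> z = K #>\<^bsub>A\<^esub> (x0 [^]\<^bsub>A\<^esub> (q * k))" using z by blast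
      have "K #>\<^bsub>A\<^esub> inv\<^bsub>A\<^esub> z = inv\<^bsub>A Mod K\<^esub> (K #>\<^bsub>A\<^esub> z)" using h.hom_inv k(1) by simp
      also have "\<dots> = inv\<^bsub>A Mod K\<^esub> (K #>\<^bsub>A\<^esub> (x0 [^]\<^bsub>A\<^esub> (q * k)))" using k(2) by simp
      also have "\<dots> = K #>\<^bsub>A\<^esub> inv\<^bsub>A\<^esub> (x0 [^]\<^bsub>A\<^esub> (q * k))" using h.hom_inv xpc by simp
      also have "inv\<^bsub>A\<^esub> (x0 [^]\<^bsub>A\<^esub> (q * k)) = x0 [^]\<^bsub>A\<^esub> (q * (- k))"
        using A.int_pow_neg[OF x0c, of "q * k"] by simp
      finally show ?thesis using k(1) by blast
    qed
    show "a \<otimes>\<^bsub>A\<^esub> b \<in> ?J" if a: "a \<in> ?J" and b: "b \<in> ?J" for a b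
    proof -
      obtain k where k: "a \<in> carrier A" "K #>\<^bsub>A\<^esub> a = K #>\<^bsub>A\<^esub> (x0 [^]\<^bsub>A\<^esub> (q * k))" using a by blast
      obtain l where l: "b \<in> carrier A" "K #>\<^bsub>A\<^esub> b = K #>\<^bsub>A\<^esub> (x0 [^]\<^bsub>A\<^esub> (q * l))" using b by blast
      have "K #>\<^bsub>A\<^esub> (a \<otimes>\<^bsub>A\<^esub> b) = (K #>\<^bsub>A\<^esub> (x0 [^]\<^bsub>A\<^esub> (q * k))) <#>\<^bsub>A\<^esub> (K #>\<^bsub>A\<^esub> (x0 [^]\<^bsub>A\<^esub> (q * l)))"
        using hmul k l by simp
      also have "\<dots> = K #>\<^bsub>A\<^esub> (x0 [^]\<^bsub>A\<^esub> (q * k) \<otimes>\<^bsub>A\<^esub> x0 [^]\<^bsub>A\<^esub> (q * l))" using hmul xpc by simp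
      also have "x0 [^]\<^bsub>A\<^esub> (q * k) \<otimes>\<^bsub>A\<^esub> x0 [^]\<^bsub>A\<^esub> (q * l) = x0 [^]\<^bsub>A\<^esub> (q * (k + l))"
        using A.int_pow_mult[OF x0c, of "q * k" "q * l"] by (simp add: distrib_left)
      finally show ?thesis using k(1) l(1) by blast
    qed
  qed
  have JA: "?J \<lhd> A"
  proof (rule A.normal_invI[OF JsA])
    fix b z assume b: "b \<in> carrier A" and z: "z \<in> ?J"
    obtain k where k: "z \<in> carrier A" "K #>\<^bsub>A\<^esub> z = K #>\<^bsub>A\<^esub> (x0 [^]\<^bsub>A\<^esub> (q * k))" using z by blast
    have zN: "z \<in> N" using z JN by blast
    have ib: "inv\<^bsub>A\<^esub> b \<in> carrier A" using b by simp
    have cm: "K #>\<^bsub>A\<^esub> (z \<otimes>\<^bsub>A\<^esub> inv\<^bsub>A\<^esub> b) = K #>\<^bsub>A\<^esub> (inv\<^bsub>A\<^esub> b \<otimes>\<^bsub>A\<^esub> z)"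
      using socle_props(2)[OF K k(1) soc[OF zN] ib] .
    have "K #>\<^bsub>A\<^esub> (b \<otimes>\<^bsub>A\<^esub> z \<otimes>\<^bsub>A\<^esub> inv\<^bsub>A\<^esub> b) = (K #>\<^bsub>A\<^esub> b) <#>\<^bsub>A\<^esub> (K #>\<^bsub>A\<^esub> (z \<otimes>\<^bsub>A\<^esub> inv\<^bsub>A\<^esub> b))"
      using hmul b k(1) ib by (simp add: A.m_assoc)
    also have "\<dots> = (K #>\<^bsub>A\<^esub> b) <#>\<^bsub>A\<^esub> (K #>\<^bsub>A\<^esub> (inv\<^bsub>A\<^esub> b \<otimes>\<^bsub>A\<^esub> z))" using cm by simp
    also have "\<dots> = K #>\<^bsub>A\<^esub> (b \<otimes>\<^bsub>A\<^esub> (inv\<^bsub>A\<^esub> b \<otimes>\<^bsub>A\<^esub> z))" using hmul b k(1) ib by simp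
    also have "b \<otimes>\<^bsub>A\<^esub> (inv\<^bsub>A\<^esub> b \<otimes>\<^bsub>A\<^esub> z) = z" using b k(1) by (simp add: A.m_assoc[symmetric])
    finally show "b \<otimes>\<^bsub>A\<^esub> z \<otimes>\<^bsub>A\<^esub> inv\<^bsub>A\<^esub> b \<in> ?J" using k b by auto
  qed
  have L: "lam b z \<in> ?J" if b: "b \<in> carrier A" and z: "z \<in> ?J" for b z
  proof -
    obtain k where k: "z \<in> carrier A" "K #>\<^bsub>A\<^esub> z = K #>\<^bsub>A\<^esub> (x0 [^]\<^bsub>A\<^esub> (q * k))" using z by blast
    have "z \<otimes>\<^bsub>A\<^esub> inv\<^bsub>A\<^esub> (x0 [^]\<^bsub>A\<^esub> (q * k)) \<in> K" using heq k xpc by blast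
    then have "lam b (z \<otimes>\<^bsub>A\<^esub> inv\<^bsub>A\<^esub> (x0 [^]\<^bsub>A\<^esub> (q * k))) \<in> K" using DK(6) b by blast
    then have "lam b z \<otimes>\<^bsub>A\<^esub> inv\<^bsub>A\<^esub> (lam b (x0 [^]\<^bsub>A\<^esub> (q * k))) \<in> K"
      using lam_add b k(1) xpc lam_invA by simp
    then have e1: "K #>\<^bsub>A\<^esub> lam b z = K #>\<^bsub>A\<^esub> lam b (x0 [^]\<^bsub>A\<^esub> (q * k))"
      using heq lam_closed b k(1) xpc by simp
    have "lam b x0 \<in> N" using DN(6) b x0 by blast
    then have "\<exists>t::int. K #>\<^bsub>A\<^esub> lam b x0 = K #>\<^bsub>A\<^esub> (x0 [^]\<^bsub>A\<^esub> t)" by (rule gen)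
    then obtain t :: int where t: "K #>\<^bsub>A\<^esub> lam b x0 = K #>\<^bsub>A\<^esub> (x0 [^]\<^bsub>A\<^esub> t)" by blast
    have "K #>\<^bsub>A\<^esub> lam b (x0 [^]\<^bsub>A\<^esub> (q * k)) = K #>\<^bsub>A\<^esub> ((lam b x0) [^]\<^bsub>A\<^esub> (q * k))"
      using lam_pow b x0c by simp
    also have "\<dots> = (K #>\<^bsub>A\<^esub> lam b x0) [^]\<^bsub>A Mod K\<^esub> (q * k)"
      using h.hom_int_pow lam_closed b x0c by simp
    also have "\<dots> = (K #>\<^bsub>A\<^esub> (x0 [^]\<^bsub>A\<^esub> t)) [^]\<^bsub>A Mod K\<^esub> (q * k)" using t by simp
    also have "\<dots> = K #>\<^bsub>A\<^esub> ((x0 [^]\<^bsub>A\<^esub> t) [^]\<^bsub>A\<^esub> (q * k))"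
      using h.hom_int_pow xpc by simp
    also have "(x0 [^]\<^bsub>A\<^esub> t) [^]\<^bsub>A\<^esub> (q * k) = x0 [^]\<^bsub>A\<^esub> (q * (t * k))"
      using A.int_pow_pow[OF x0c] by (simp add: ac_simps)
    finally show ?thesis using e1 lam_closed b k(1) by auto
  qed
  have S: "K #>\<^bsub>A\<^esub> (z \<otimes>\<^bsub>M\<^esub> b) = K #>\<^bsub>A\<^esub> (z \<otimes>\<^bsub>A\<^esub> b)" if z: "z \<in> ?J" and b: "b \<in> carrier A" for z b
  proof -
    have zN: "z \<in> N" using z JN by blast
    show ?thesis using socle_props(1)[OF K _ soc[OF zN] b] z by blast
  qed
  show ?thesis using ideal_normal_M_crit[OF K JA KJ L S] by blast
qed

end


lemma int_subgroup:
  fixes S :: "int set"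
  assumes z: "0 \<in> S" and add: "\<And>a b. a \<in> S \<Longrightarrow> b \<in> S \<Longrightarrow> a + b \<in> S"
    and neg: "\<And>a. a \<in> S \<Longrightarrow> - a \<in> S"
  shows "\<exists>m\<ge>0. S = {k. m dvd k}"
proof -
  have multn: "a * int n \<in> S" if "a \<in> S" for a n
    by (induction n) (use z add that in \<open>auto simp: distrib_left\<close>)
  have mult: "a * t \<in> S" if "a \<in> S" for a t
  proof (cases "t \<ge> 0")
    case True then show ?thesis using multn[OF that, of "nat t"] by simp
  next
    case False then show ?thesis using neg[OF multn[OF that, of "nat (-t)"]] by simp
  qed
  show ?thesis
  proof (cases "S \<subseteq> {0}")
    case True
    then have "S = {0}" using z by blast
    then show ?thesis by (intro exI[of _ 0]) auto
  next
    case False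
    then obtain a where a: "a \<in> S" "a \<noteq> 0" by blast
    define P where "P = (\<lambda>n::nat. n > 0 \<and> int n \<in> S)"
    have "P (nat \<bar>a\<bar>)" unfolding P_def using a neg by (cases "a \<ge> 0") auto
    then have Pm: "P (LEAST n. P n)" by (rule LeastI)
    define m where "m = int (LEAST n. P n)"
    have mpos: "m > 0" and mS: "m \<in> S" using Pm unfolding P_def m_def by auto
    have min: "\<And>r. 0 < r \<Longrightarrow> r < m \<Longrightarrow> r \<notin> S"
    proof
      fix r assume r: "0 < r" "r < m" "r \<in> S"
      then have "P (nat r)" unfolding P_def by simp
      then have "(LEAST n. P n) \<le> nat r" by (rule Least_le)
      then show False using r unfolding m_def by linarith
    qed
    have "S = {k. m dvd k}"
    proof
      show "S \<subseteq> {k. m dvd k}"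
      proof
        fix k assume k: "k \<in> S"
        have "k + m * (- (k div m)) \<in> S" using add[OF k mult[OF mS]] by blast
        moreover have "k + m * (- (k div m)) = k mod m" using minus_mult_div_eq_mod[of k m] by simp
        ultimately have r1: "k mod m \<in> S" by simp
        have r2: "0 \<le> k mod m" "k mod m < m" using mpos by auto
        have "\<not> (0 < k mod m)" using min[of "k mod m"] r1 r2 by blast
        then have "k mod m = 0" using r2 by linarith
        then show "k \<in> {k. m dvd k}" by auto
      qed
      show "{k. m dvd k} \<subseteq> S" using mult[OF mS] by auto
    qed
    then show ?thesis using mpos by (intro exI[of _ m]) auto
  qed
qed

lemma nat_step_exists:
  assumes "P (0::nat)" "\<not> P n"
  shows "\<exists>j<n. P j \<and> \<not> P (Suc j)"
  using assms
proof (induction n)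
  case 0 then show ?case by simp
next
  case (Suc n)
  then show ?case by (cases "P n") (auto intro: less_SucI)
qed


context sbrace begin

lemma prime_case:
  assumes K: "brace_ideal A M K" and N: "brace_ideal A M N" and KN: "K \<subseteq> N"
    and KC: "K \<subseteq> C" and NC: "\<not> N \<subseteq> C" and C: "subbrace A M C"
    and p: "Factorial_Ring.prime (card (brace_quot_set A K N))"
  shows "Factorial_Ring.prime (card ((\<lambda>n. (C \<inter> N) #>\<^bsub>A\<^esub> n) ` N)) \<and>
         (\<forall>n\<in>N. (C \<inter> N) #>\<^bsub>A\<^esub> n = (C \<inter> N) #>\<^bsub>M\<^esub> n)"
proof -
  note DK = idealD[OF K] and DN = idealD[OF N] and DC = subbraceD[OF C]
  have DDs: "subgroup (C \<inter> N) A" using A.subgroups_Inter_pair DC(1) DN(1) by blast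
  have gN: "group (A\<lparr>carrier := N\<rparr>)" using subgroup.subgroup_is_group[OF DN(1) grpA] .
  have Ks: "subgroup K (A\<lparr>carrier := N\<rparr>)" using A.subgroup_incl[OF DK(1) DN(1) KN] .
  have Ds: "subgroup (C \<inter> N) (A\<lparr>carrier := N\<rparr>)" using A.subgroup_incl[OF DDs DN(1)] by blast
  have rc: "rcosets\<^bsub>A\<lparr>carrier := N\<rparr>\<^esub> K = brace_quot_set A K N"
    unfolding RCOSETS_def brace_quot_set_def by auto
  have "C \<inter> N = K \<or> C \<inter> N = carrier (A\<lparr>carrier := N\<rparr>)"
    using group.prime_index_maximal[OF gN Ks Ds _] p KC KN unfolding rc by blast
  then have e: "C \<inter> N = K" using NC by auto
  have "(\<lambda>n. (C \<inter> N) #>\<^bsub>A\<^esub> n) ` N = brace_quot_set A K N"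
    unfolding e brace_quot_set_def by simp
  moreover have "\<forall>n\<in>N. (C \<inter> N) #>\<^bsub>A\<^esub> n = (C \<inter> N) #>\<^bsub>M\<^esub> n"
    using ideal_rcos_eq[OF K] DN(5) e by auto
  ultimately show ?thesis using p by simp
qed

end


context sbrace begin

lemma cyc_case:
  assumes K: "brace_ideal A M K" and N: "brace_ideal A M N" and KN: "K \<subseteq> N"
    and KC: "K \<subseteq> C" and NC: "\<not> N \<subseteq> C" and C: "subbrace A M C"
    and maxC: "\<And>D. subbrace A M D \<Longrightarrow> C \<subseteq> D \<Longrightarrow> D \<noteq> carrier A \<Longrightarrow> D = C"
    and x0: "x0 \<in> N"
    and gen: "\<And>n. n \<in> N \<Longrightarrow> \<exists>k::int. K #>\<^bsub>A\<^esub> n = K #>\<^bsub>A\<^esub> (x0 [^]\<^bsub>A\<^esub> k)"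
    and soc: "\<And>n. n \<in> N \<Longrightarrow> K #>\<^bsub>A\<^esub> n \<in> brace_socle (A Mod K) (M Mod K)"
  shows "Factorial_Ring.prime (card ((\<lambda>n. (C \<inter> N) #>\<^bsub>A\<^esub> n) ` N)) \<and>
         (\<forall>n\<in>N. (C \<inter> N) #>\<^bsub>A\<^esub> n = (C \<inter> N) #>\<^bsub>M\<^esub> n)"
proof -
  note DK = idealD[OF K] and DN = idealD[OF N] and DC = subbraceD[OF C]
  define DD where "DD = C \<inter> N"
  have DDs: "subgroup DD A" unfolding DD_def using A.subgroups_Inter_pair DC(1) DN(1) by blast
  have DDsM: "subgroup DD M" unfolding DD_def using M.subgroups_Inter_pair DC(2) DN(2) by blast
  have KDD: "K \<subseteq> DD" unfolding DD_def using KC KN by blast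
  have x0c: "x0 \<in> carrier A" using x0 DN(5) by auto
  have xpc: "\<And>k::int. x0 [^]\<^bsub>A\<^esub> k \<in> carrier A" using x0c by simp
  have xpN: "\<And>k::int. x0 [^]\<^bsub>A\<^esub> k \<in> N" using A.subgroup_int_pow_closed[OF DN(1) x0] .
  have heq: "\<And>a b. a \<in> carrier A \<Longrightarrow> b \<in> carrier A \<Longrightarrow> K #>\<^bsub>A\<^esub> a = K #>\<^bsub>A\<^esub> b \<longleftrightarrow> a \<otimes>\<^bsub>A\<^esub> inv\<^bsub>A\<^esub> b \<in> K"
    using A.rcos_eq_iff[OF DK(1)] by blast
  have decomp: "\<exists>i\<in>K. \<exists>k::int. n = i \<otimes>\<^bsub>A\<^esub> x0 [^]\<^bsub>A\<^esub> k" if n: "n \<in> N" for n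
  proof -
    obtain k :: int where k: "K #>\<^bsub>A\<^esub> n = K #>\<^bsub>A\<^esub> (x0 [^]\<^bsub>A\<^esub> k)" using gen[OF n] by blast
    have nc: "n \<in> carrier A" using n DN(5) by auto
    have "n \<otimes>\<^bsub>A\<^esub> inv\<^bsub>A\<^esub> (x0 [^]\<^bsub>A\<^esub> k) \<in> K" using heq nc xpc k by blast
    moreover have "n = (n \<otimes>\<^bsub>A\<^esub> inv\<^bsub>A\<^esub> (x0 [^]\<^bsub>A\<^esub> k)) \<otimes>\<^bsub>A\<^esub> x0 [^]\<^bsub>A\<^esub> k"
      using nc xpc by (simp add: A.m_assoc)
    ultimately show ?thesis by blast
  qed
  define S where "S = {k::int. x0 [^]\<^bsub>A\<^esub> k \<in> C}"
  have "\<exists>m\<ge>0. S = {k. m dvd k}"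
  proof (rule int_subgroup)
    show "0 \<in> S" unfolding S_def using subgroup.one_closed[OF DC(1)] by simp
    show "a + b \<in> S" if "a \<in> S" "b \<in> S" for a b
      using that subgroup.m_closed[OF DC(1)] A.int_pow_mult[OF x0c, of a b] unfolding S_def by simp
    show "- a \<in> S" if a: "a \<in> S" for a
    proof -
      have "inv\<^bsub>A\<^esub> (x0 [^]\<^bsub>A\<^esub> a) \<in> C" using a unfolding S_def by (simp add: subgroup.m_inv_closed[OF DC(1)])
      then show ?thesis unfolding S_def using A.int_pow_neg[OF x0c, of a] by simp
    qed
  qed
  then obtain m where m0: "m \<ge> 0" and Sm: "S = {k. m dvd k}" by blast
  have inS: "\<And>k. x0 [^]\<^bsub>A\<^esub> k \<in> C \<longleftrightarrow> m dvd k" using Sm unfolding S_def by blast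
  have m1: "m \<noteq> 1"
  proof
    assume "m = 1"
    then have all: "\<And>k::int. x0 [^]\<^bsub>A\<^esub> k \<in> C" using inS by simp
    have "N \<subseteq> C"
    proof
      fix n assume "n \<in> N"
      then obtain i k where ik: "i \<in> K" "n = i \<otimes>\<^bsub>A\<^esub> x0 [^]\<^bsub>A\<^esub> (k::int)" using decomp by blast
      then show "n \<in> C" using subgroup.m_closed[OF DC(1)] KC all by blast
    qed
    then show False using NC by blast
  qed
  have divs: "q = m" if q2: "q \<ge> 2" and qm: "q dvd m" for q
  proof (rule ccontr)
    assume qne: "q \<noteq> m"
    define J where "J = {z \<in> carrier A. \<exists>k::int. K #>\<^bsub>A\<^esub> z = K #>\<^bsub>A\<^esub> (x0 [^]\<^bsub>A\<^esub> (q * k))}"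
    have JI: "brace_ideal A M J" unfolding J_def using cyc_ideal[OF K N KN x0 gen soc] .
    note DJ = idealD[OF JI]
    define T where "T = C <#>\<^bsub>A\<^esub> J"
    have Ts: "subbrace A M T" unfolding T_def using subbrace_set_mult_ideal[OF C JI] .
    have CT: "C \<subseteq> T"
    proof
      fix c assume c: "c \<in> C"
      have "c = c \<otimes>\<^bsub>A\<^esub> \<one>\<^bsub>A\<^esub>" using c DC(3) by auto
      then show "c \<in> T" unfolding T_def set_mult_def using c subgroup.one_closed[OF DJ(1)] by blast
    qed
    have x0T: "x0 \<notin> T"
    proof
      assume "x0 \<in> T"
      then obtain c z where cz: "c \<in> C" "z \<in> J" "x0 = c \<otimes>\<^bsub>A\<^esub> z" unfolding T_def set_mult_def by blast
      then obtain k :: int where k: "z \<in> carrier A" "K #>\<^bsub>A\<^esub> z = K #>\<^bsub>A\<^esub> (x0 [^]\<^bsub>A\<^esub> (q * k))"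
        unfolding J_def by blast
      have cc: "c \<in> carrier A" using cz DC(3) by auto
      have "z \<otimes>\<^bsub>A\<^esub> inv\<^bsub>A\<^esub> (x0 [^]\<^bsub>A\<^esub> (q * k)) \<in> K" using heq k xpc by blast
      then have "c \<otimes>\<^bsub>A\<^esub> (z \<otimes>\<^bsub>A\<^esub> inv\<^bsub>A\<^esub> (x0 [^]\<^bsub>A\<^esub> (q * k))) \<in> C"
        using subgroup.m_closed[OF DC(1)] cz(1) KC by blast
      moreover have "c \<otimes>\<^bsub>A\<^esub> (z \<otimes>\<^bsub>A\<^esub> inv\<^bsub>A\<^esub> (x0 [^]\<^bsub>A\<^esub> (q * k))) = x0 [^]\<^bsub>A\<^esub> (1 - q * k)"
        using cz(3) cc k(1) xpc A.int_pow_diff[OF x0c, of 1 "q * k"] x0c by (simp add: A.m_assoc)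
      ultimately have "m dvd (1 - q * k)" using inS by simp
      then have "q dvd (1 - q * k)" using qm dvd_trans by blast
      then obtain t where t: "1 - q * k = q * t" by (elim dvdE)
      then have "1 = q * (t + k)" by (simp add: algebra_simps)
      then have "q dvd 1" by (rule dvdI)
      then have "q \<le> 1" by (rule zdvd_imp_le) simp
      then show False using q2 by simp
    qed
    then have "T \<noteq> carrier A" using x0c by blast
    then have TC: "T = C" using maxC[OF Ts CT] by blast
    have "K #>\<^bsub>A\<^esub> (x0 [^]\<^bsub>A\<^esub> q) = K #>\<^bsub>A\<^esub> (x0 [^]\<^bsub>A\<^esub> (q * 1))" by simp
    then have "x0 [^]\<^bsub>A\<^esub> q \<in> J" unfolding J_def using xpc by blast
    have memT: "\<And>c z. c \<in> C \<Longrightarrow> z \<in> J \<Longrightarrow> c \<otimes>\<^bsub>A\<^esub> z \<in> T"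
      unfolding T_def set_mult_def by blast
    have "\<one>\<^bsub>A\<^esub> \<otimes>\<^bsub>A\<^esub> x0 [^]\<^bsub>A\<^esub> q \<in> T"
      by (rule memT[OF subgroup.one_closed[OF DC(1)] \<open>x0 [^]\<^bsub>A\<^esub> q \<in> J\<close>])
    then have "x0 [^]\<^bsub>A\<^esub> q \<in> C" using TC xpc[of q] by simp
    then have mq: "m dvd q" using inS by blast
    have "q = m" by (rule zdvd_antisym_nonneg) (use q2 m0 qm mq in auto)
    then show False using qne by simp
  qed
  have m2: "m \<ge> 2"
  proof -
    have "m \<noteq> 0" using divs[of 2] by auto
    then show ?thesis using m0 m1 by linarith
  qed
  have pm: "Factorial_Ring.prime (nat m)"
    unfolding prime_nat_iff
  proof (intro conjI allI impI)
    show "1 < nat m" using m2 by simp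
    fix d assume d: "d dvd nat m"
    then have di: "int d dvd m" using m0 by (metis int_dvd_int_iff int_nat_eq)
    show "d = 1 \<or> d = nat m"
    proof (cases "d \<ge> 2")
      case True then have "int d = m" using divs[OF _ di] by simp
      then show ?thesis by (metis nat_int)
    next
      case False
      moreover have "d \<noteq> 0"
      proof
        assume "d = 0"
        then have "nat m = 0" using d by simp
        then show False using m2 by simp
      qed
      ultimately show ?thesis by simp
    qed
  qed
  define f where "f = (\<lambda>j::nat. DD #>\<^bsub>A\<^esub> (x0 [^]\<^bsub>A\<^esub> (int j)))"
  have DDC: "DD \<subseteq> carrier A" using DDs subgroup.subset by blast
  have img: "(\<lambda>n. DD #>\<^bsub>A\<^esub> n) ` N = f ` {..<nat m}"
  proof
    show "f ` {..<nat m} \<subseteq> (\<lambda>n. DD #>\<^bsub>A\<^esub> n) ` N" unfolding f_def using xpN by blast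
    show "(\<lambda>n. DD #>\<^bsub>A\<^esub> n) ` N \<subseteq> f ` {..<nat m}"
    proof
      fix Q assume "Q \<in> (\<lambda>n. DD #>\<^bsub>A\<^esub> n) ` N"
      then obtain n where n: "n \<in> N" "Q = DD #>\<^bsub>A\<^esub> n" by blast
      obtain i k where ik: "i \<in> K" "n = i \<otimes>\<^bsub>A\<^esub> x0 [^]\<^bsub>A\<^esub> (k::int)" using decomp[OF n(1)] by blast
      have ic: "i \<in> carrier A" using ik DK(5) by auto
      have "DD #>\<^bsub>A\<^esub> n = DD #>\<^bsub>A\<^esub> (x0 [^]\<^bsub>A\<^esub> k)"
        using A.rcos_eq_iff[OF DDs] ik ic xpc KDD by (simp add: A.m_assoc subset_iff)
      also have "\<dots> = DD #>\<^bsub>A\<^esub> (x0 [^]\<^bsub>A\<^esub> (k mod m))"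
      proof -
        have "x0 [^]\<^bsub>A\<^esub> k \<otimes>\<^bsub>A\<^esub> inv\<^bsub>A\<^esub> (x0 [^]\<^bsub>A\<^esub> (k mod m)) = x0 [^]\<^bsub>A\<^esub> (k - k mod m)"
          using A.int_pow_diff[OF x0c] by simp
        moreover have "m dvd (k - k mod m)" by (simp add: mod_eq_dvd_iff[symmetric])
        ultimately have "x0 [^]\<^bsub>A\<^esub> k \<otimes>\<^bsub>A\<^esub> inv\<^bsub>A\<^esub> (x0 [^]\<^bsub>A\<^esub> (k mod m)) \<in> DD"
          unfolding DD_def using inS xpN by simp
        then show ?thesis using A.rcos_eq_iff[OF DDs] xpc by blast
      qed
      also have "\<dots> = f (nat (k mod m))" unfolding f_def using m2 by simp
      finally have "Q = f (nat (k mod m))" using n by simp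
      moreover have "nat (k mod m) < nat m" using m2 by simp
      ultimately show "Q \<in> f ` {..<nat m}" by blast
    qed
  qed
  have inj: "inj_on f {..<nat m}"
  proof (rule inj_onI)
    fix a b assume a: "a \<in> {..<nat m}" and b: "b \<in> {..<nat m}" and fab: "f a = f b"
    have "x0 [^]\<^bsub>A\<^esub> (int a) \<otimes>\<^bsub>A\<^esub> inv\<^bsub>A\<^esub> (x0 [^]\<^bsub>A\<^esub> (int b)) \<in> DD"
      using fab unfolding f_def using A.rcos_eq_iff[OF DDs] xpc by blast
    then have "x0 [^]\<^bsub>A\<^esub> (int a - int b) \<in> C" using A.int_pow_diff[OF x0c] unfolding DD_def by simp
    then have "m dvd (int a - int b)" using inS by simp
    then have "int a mod m = int b mod m" by (simp add: mod_eq_dvd_iff)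
    moreover have "int a mod m = int a" "int b mod m = int b" using a b m2 by auto
    ultimately show "a = b" by simp
  qed
  have card: "card ((\<lambda>n. DD #>\<^bsub>A\<^esub> n) ` N) = nat m"
    unfolding img using card_image[OF inj] by simp
  have ceq: "DD #>\<^bsub>A\<^esub> n = DD #>\<^bsub>M\<^esub> n" if n: "n \<in> N" for n
  proof
    have nc: "n \<in> carrier A" using n DN(5) by auto
    show "DD #>\<^bsub>A\<^esub> n \<subseteq> DD #>\<^bsub>M\<^esub> n"
    proof
      fix x assume "x \<in> DD #>\<^bsub>A\<^esub> n"
      then obtain d where d: "d \<in> DD" "x = d \<otimes>\<^bsub>A\<^esub> n" unfolding r_coset_def by blast
      have dc: "d \<in> carrier A" and dN: "d \<in> N" using d DDC unfolding DD_def by auto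
      have "d \<otimes>\<^bsub>A\<^esub> n \<in> K #>\<^bsub>A\<^esub> (d \<otimes>\<^bsub>A\<^esub> n)" using A.rcos_self[OF _ DK(1)] dc nc by simp
      also have "\<dots> = K #>\<^bsub>A\<^esub> (d \<otimes>\<^bsub>M\<^esub> n)" using socle_props(1)[OF K dc soc[OF dN] nc] by simp
      also have "\<dots> = K #>\<^bsub>M\<^esub> (d \<otimes>\<^bsub>M\<^esub> n)" using ideal_rcos_eq[OF K Mc[OF dc nc]] .
      finally obtain i where i: "i \<in> K" "d \<otimes>\<^bsub>A\<^esub> n = i \<otimes>\<^bsub>M\<^esub> (d \<otimes>\<^bsub>M\<^esub> n)" unfolding r_coset_def by blast
      have ic: "i \<in> carrier A" using i DK(5) by auto
      have "x = (i \<otimes>\<^bsub>M\<^esub> d) \<otimes>\<^bsub>M\<^esub> n" using d i ic dc nc carr by (simp add: M.m_assoc)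
      moreover have "i \<otimes>\<^bsub>M\<^esub> d \<in> DD" using subgroup.m_closed[OF DDsM] i KDD d by blast
      ultimately show "x \<in> DD #>\<^bsub>M\<^esub> n" unfolding r_coset_def by blast
    qed
    show "DD #>\<^bsub>M\<^esub> n \<subseteq> DD #>\<^bsub>A\<^esub> n"
    proof
      fix x assume "x \<in> DD #>\<^bsub>M\<^esub> n"
      then obtain d where d: "d \<in> DD" "x = d \<otimes>\<^bsub>M\<^esub> n" unfolding r_coset_def by blast
      have dc: "d \<in> carrier A" and dN: "d \<in> N" using d DDC unfolding DD_def by auto
      have "d \<otimes>\<^bsub>M\<^esub> n \<in> K #>\<^bsub>M\<^esub> (d \<otimes>\<^bsub>M\<^esub> n)" using M.rcos_self[OF _ DK(2)] dc nc carr Mc by simp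
      also have "\<dots> = K #>\<^bsub>A\<^esub> (d \<otimes>\<^bsub>M\<^esub> n)" using ideal_rcos_eq[OF K Mc[OF dc nc]] by simp
      also have "\<dots> = K #>\<^bsub>A\<^esub> (d \<otimes>\<^bsub>A\<^esub> n)" using socle_props(1)[OF K dc soc[OF dN] nc] .
      finally obtain i where i: "i \<in> K" "d \<otimes>\<^bsub>M\<^esub> n = i \<otimes>\<^bsub>A\<^esub> (d \<otimes>\<^bsub>A\<^esub> n)" unfolding r_coset_def by blast
      have ic: "i \<in> carrier A" using i DK(5) by auto
      have "x = (i \<otimes>\<^bsub>A\<^esub> d) \<otimes>\<^bsub>A\<^esub> n" using d i ic dc nc by (simp add: A.m_assoc)
      moreover have "i \<otimes>\<^bsub>A\<^esub> d \<in> DD" using subgroup.m_closed[OF DDs] i KDD d by blast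
      ultimately show "x \<in> DD #>\<^bsub>A\<^esub> n" unfolding r_coset_def by blast
    qed
  qed
  show ?thesis using card pm ceq unfolding DD_def by simp
qed

end


theorem theorem3p19:
  fixes A M :: "'a monoid" and C :: "'a set"
  assumes "skew_brace A M"
    and "supersoluble_brace A M"
    and "maximal_subbrace A M C"
  shows "Factorial_Ring.prime (card (rcosets\<^bsub>A\<^esub> C)) \<and> card (rcosets\<^bsub>M\<^esub> C) = card (rcosets\<^bsub>A\<^esub> C)
         \<and> maximal_subgroup C A \<and> maximal_subgroup C M"
proof -
  interpret sbrace A M using assms(1) by (rule sbrace.intro)
  obtain I :: "nat \<Rightarrow> 'a set" and n :: nat where
    I0: "I 0 = {\<one>\<^bsub>A\<^esub>}" and In: "I n = carrier A" and Iid: "\<forall>i\<le>n. brace_ideal A M (I i)" and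
    ch: "\<forall>i<n. I i \<subseteq> I (Suc i) \<and>
           ((infinite_cyclic_subset (A Mod (I i)) (brace_quot_set A (I i) (I (Suc i))) \<and>
             brace_quot_set A (I i) (I (Suc i)) \<subseteq> brace_socle (A Mod (I i)) (M Mod (I i)))
            \<or> Factorial_Ring.prime (card (brace_quot_set A (I i) (I (Suc i)))))"
    using assms(2) unfolding supersoluble_brace_def by blast
  have Cs: "subbrace A M C" and Cne: "C \<noteq> carrier A"
    and maxC: "\<And>D. subbrace A M D \<Longrightarrow> C \<subseteq> D \<Longrightarrow> D \<noteq> carrier A \<Longrightarrow> D = C"
    using assms(3) unfolding maximal_subbrace_def by blast+
  note DC = subbraceD[OF Cs]
  have "I 0 \<subseteq> C" using I0 subgroup.one_closed[OF DC(1)] by simp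
  moreover have "\<not> I n \<subseteq> C" using In Cne DC(3) by blast
  ultimately obtain j where j: "j < n" "I j \<subseteq> C" "\<not> I (Suc j) \<subseteq> C"
    using nat_step_exists[of "\<lambda>i. I i \<subseteq> C" n] by blast
  define K where "K = I j"
  define N where "N = I (Suc j)"
  have K: "brace_ideal A M K" and N: "brace_ideal A M N" unfolding K_def N_def using Iid j(1) by auto
  have KN: "K \<subseteq> N" and KC: "K \<subseteq> C" and NC: "\<not> N \<subseteq> C"
    unfolding K_def N_def using ch j by auto
  have disj: "(infinite_cyclic_subset (A Mod K) (brace_quot_set A K N) \<and>
             brace_quot_set A K N \<subseteq> brace_socle (A Mod K) (M Mod K))
            \<or> Factorial_Ring.prime (card (brace_quot_set A K N))"
    unfolding K_def N_def using ch j(1) by blast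
  note DK = idealD[OF K] and DN = idealD[OF N]
  have S: "C <#>\<^bsub>A\<^esub> N = carrier A"
  proof (rule ccontr)
    assume ne: "C <#>\<^bsub>A\<^esub> N \<noteq> carrier A"
    have memS: "\<And>c z. c \<in> C \<Longrightarrow> z \<in> N \<Longrightarrow> c \<otimes>\<^bsub>A\<^esub> z \<in> C <#>\<^bsub>A\<^esub> N"
      unfolding set_mult_def by blast
    have CS: "C \<subseteq> C <#>\<^bsub>A\<^esub> N"
    proof
      fix c assume c: "c \<in> C"
      have "c \<otimes>\<^bsub>A\<^esub> \<one>\<^bsub>A\<^esub> \<in> C <#>\<^bsub>A\<^esub> N" by (rule memS[OF c subgroup.one_closed[OF DN(1)]])
      then show "c \<in> C <#>\<^bsub>A\<^esub> N" using c DC(3) by auto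
    qed
    have NS: "N \<subseteq> C <#>\<^bsub>A\<^esub> N"
    proof
      fix z assume z: "z \<in> N"
      have "\<one>\<^bsub>A\<^esub> \<otimes>\<^bsub>A\<^esub> z \<in> C <#>\<^bsub>A\<^esub> N" by (rule memS[OF subgroup.one_closed[OF DC(1)] z])
      then show "z \<in> C <#>\<^bsub>A\<^esub> N" using z DN(5) by auto
    qed
    have "C <#>\<^bsub>A\<^esub> N = C" using maxC[OF subbrace_set_mult_ideal[OF Cs N] CS ne] .
    then show False using NS NC by blast
  qed
  have SM: "C <#>\<^bsub>M\<^esub> N = carrier M" using S set_mult_ideal_eq[OF Cs N] carr by simp
  have cardA: "card (rcosets\<^bsub>A\<^esub> C) = card ((\<lambda>n. (C \<inter> N) #>\<^bsub>A\<^esub> n) ` N)"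
    using A.index_transfer[OF DC(1) DN(1) S] .
  have cardM: "card (rcosets\<^bsub>M\<^esub> C) = card ((\<lambda>n. (C \<inter> N) #>\<^bsub>M\<^esub> n) ` N)"
    using M.index_transfer[OF DC(2) DN(2) SM] .
  have key: "Factorial_Ring.prime (card ((\<lambda>n. (C \<inter> N) #>\<^bsub>A\<^esub> n) ` N)) \<and>
         (\<forall>n\<in>N. (C \<inter> N) #>\<^bsub>A\<^esub> n = (C \<inter> N) #>\<^bsub>M\<^esub> n)"
    using disj
  proof
    assume "Factorial_Ring.prime (card (brace_quot_set A K N))"
    then show ?thesis using prime_case[OF K N KN KC NC Cs] by blast
  next
    assume cyc: "infinite_cyclic_subset (A Mod K) (brace_quot_set A K N) \<and>
             brace_quot_set A K N \<subseteq> brace_socle (A Mod K) (M Mod K)"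
    then obtain g where g: "g \<in> brace_quot_set A K N"
      and rg: "brace_quot_set A K N = range (\<lambda>k::int. g [^]\<^bsub>A Mod K\<^esub> k)"
      unfolding infinite_cyclic_subset_def by blast
    obtain x0 where x0: "x0 \<in> N" "g = K #>\<^bsub>A\<^esub> x0" using g unfolding brace_quot_set_def by blast
    have x0c: "x0 \<in> carrier A" using x0 DN(5) by auto
    have gen: "\<exists>k::int. K #>\<^bsub>A\<^esub> n = K #>\<^bsub>A\<^esub> (x0 [^]\<^bsub>A\<^esub> k)" if n: "n \<in> N" for n
    proof -
      have "K #>\<^bsub>A\<^esub> n \<in> brace_quot_set A K N" using n unfolding brace_quot_set_def by blast
      then obtain k :: int where "K #>\<^bsub>A\<^esub> n = g [^]\<^bsub>A Mod K\<^esub> k" using rg by blast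
      also have "g [^]\<^bsub>A Mod K\<^esub> k = K #>\<^bsub>A\<^esub> (x0 [^]\<^bsub>A\<^esub> k)"
        using normal.FactGroup_int_pow[OF DK(3) x0c] x0(2) by simp
      finally show ?thesis by blast
    qed
    have soc: "K #>\<^bsub>A\<^esub> n \<in> brace_socle (A Mod K) (M Mod K)" if n: "n \<in> N" for n
    proof -
      have "K #>\<^bsub>A\<^esub> n \<in> brace_quot_set A K N" using n unfolding brace_quot_set_def by blast
      then show ?thesis using cyc by blast
    qed
    show ?thesis using cyc_case[OF K N KN KC NC Cs maxC x0(1) gen soc] by blast
  qed
  have pA: "Factorial_Ring.prime (card (rcosets\<^bsub>A\<^esub> C))" unfolding cardA using key by (rule conjunct1)
  have eqM: "card (rcosets\<^bsub>M\<^esub> C) = card (rcosets\<^bsub>A\<^esub> C)"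
  proof -
    have "(\<lambda>n. (C \<inter> N) #>\<^bsub>M\<^esub> n) ` N = (\<lambda>n. (C \<inter> N) #>\<^bsub>A\<^esub> n) ` N"
      using key by (intro image_cong) auto
    then show ?thesis using cardA cardM by simp
  qed
  have pM: "Factorial_Ring.prime (card (rcosets\<^bsub>M\<^esub> C))" using pA eqM by simp
  have mA: "maximal_subgroup C A"
    unfolding maximal_subgroup_def using DC(1) Cne A.prime_index_maximal[OF DC(1) _ _ pA] by blast
  have mM: "maximal_subgroup C M"
    unfolding maximal_subgroup_def using DC(2) Cne carr M.prime_index_maximal[OF DC(2) _ _ pM] by auto
  show ?thesis using pA eqM mA mM by blast
qed

end
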